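(* Let $H=\varprojlim\langle\{H_n\},\{h^n_k\}_{k<n}\rangle$ be a profinite poset and $\mathbb{P}=\varprojlim\langle\{P_n\},\{p^n_k\}_{k<n}\rangle$ where $\langle\{P_n\},\{p^n_k\}\rangle$ is a Fraïssé sequence in the category of finite posets with quotient maps, and let $f:\mathbb{P}\to H$ be a continuous quotient map. Then there is a continuous, join-preserving quotient map $q:\mathbb{O}(\mathbb{P})\to\mathbb{O}(H)$ such that $q\circ\phi=\psi\circ f$, where $\phi:\mathbb{P}\to\mathbb{O}(\mathbb{P})$ and $\psi:H\to\mathbb{O}(H)$ are given by $(x_n)\mapsto(\downarrow x_n)$.
   Context: A quotient map between posets is a surjective order-preserving map $\phi:A\to B$ such that for all $a\le b$ in $B$ there are $x\le y$ in $A$ with $\phi(x)=a,\phi(y)=b$. A profinite poset is an inverse limit $\{(x_n)\in\prod_nP_n:p^{n+1}_n(x_{n+1})=x_n\ \forall n\}$ of nonempty finite posets $P_n$ with quotient maps $p^m_k:P_m\to P_k$ ($k<m$, $p^k_l\circ p^m_k=p^m_l$), ordered coordinatewise, with the subspace topology of the product of discrete spaces. Fraïssé sequence: (U) for every finite poset $X$ there are $n$ and a quotient map $P_n\to X$; (A) for every $k$, every finite poset $Y$ and quotient map $f:Y\to P_k$ there exist $\ell>k$ and a quotient map $g:P_\ell\to Y$ with $f\circ g=p^\ell_k$. $\downarrow x=\{m:m\le x\}$; $\mathcal{O}(P_n)$ is the set of down-sets of $P_n$ under inclusion; for a quotient map $p:Q\to R$ of finite posets, $\hat p(\emptyset)=\emptyset$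 and $\hat p(A)=\bigcup_i\downarrow p(a_i)$ over the maximal elements $a_i$ of $A$. For such an inverse system with limit $P$, $\mathbb{O}(P):=\{(A_n)\in\prod_n\mathcal{O}(P_n):\widehat{p^{n+1}_n}(A_{n+1})=A_n\ \forall n\}$, ordered coordinatewise by inclusion and topologized as a subspace of $\prod_n\mathcal{O}(P_n)$ with discrete factors; it is a lattice with join $(A_n)\vee(B_n)=(A_n\cup B_n)$. *)

theory Defs
  imports "HOL-Analysis.Analysis"
begin

definition finite_poset :: "'a set \<Rightarrow> ('a \<Rightarrow> 'a \<Rightarrow> bool) \<Rightarrow> bool" where
  "finite_poset X le \<longleftrightarrow> finite X \<and> X \<noteq> {} \<and>
     (\<forall>x\<in>X. le x x) \<and>
     (\<forall>x\<in>X. \<forall>y\<in>X. le x y \<and> le y x \<longrightarrow> x = y) \<and>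
     (\<forall>x\<in>X. \<forall>y\<in>X. \<forall>z\<in>X. le x y \<and> le y z \<longrightarrow> le x z)"

definition poset_quotient ::
  "'a set \<Rightarrow> ('a \<Rightarrow> 'a \<Rightarrow> bool) \<Rightarrow> 'b set \<Rightarrow> ('b \<Rightarrow> 'b \<Rightarrow> bool) \<Rightarrow> ('a \<Rightarrow> 'b) \<Rightarrow> bool" where
  "poset_quotient A leA B leB \<phi> \<longleftrightarrow>
     \<phi> ` A = B \<and>
     (\<forall>x\<in>A. \<forall>y\<in>A. leA x y \<longrightarrow> leB (\<phi> x) (\<phi> y)) \<and>
     (\<forall>a\<in>B. \<forall>b\<in>B. leB a b \<longrightarrow> (\<exists>x\<in>A. \<exists>y\<in>A. leA x y \<and> \<phi> x = a \<and> \<phi> y = b))"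

definition inv_system ::
  "(nat \<Rightarrow> 'a set) \<Rightarrow> (nat \<Rightarrow> 'a \<Rightarrow> 'a \<Rightarrow> bool) \<Rightarrow> (nat \<Rightarrow> nat \<Rightarrow> 'a \<Rightarrow> 'a) \<Rightarrow> bool" where
  "inv_system P le p \<longleftrightarrow>
     (\<forall>n. finite_poset (P n) (le n)) \<and>
     (\<forall>m k. k < m \<longrightarrow> poset_quotient (P m) (le m) (P k) (le k) (p m k)) \<and>
     (\<forall>m k l. l < k \<and> k < m \<longrightarrow> (\<forall>x\<in>P m. p k l (p m k x) = p m l x))"

text \<open>Fraisse sequence. Arbitrary finite posets are represented (up to isomorphism)
  by finite posets with carrier a subset of nat.\<close>

definition fraisse_seq ::
  "(nat \<Rightarrow> 'a set) \<Rightarrow> (nat \<Rightarrow> 'a \<Rightarrow> 'a \<Rightarrow> bool) \<Rightarrow> (nat \<Rightarrow> nat \<Rightarrow> 'a \<Rightarrow> 'a) \<Rightarrow> bool" where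
  "fraisse_seq P le p \<longleftrightarrow>
     inv_system P le p \<and>
     (\<forall>(X::nat set) leX. finite_poset X leX \<longrightarrow>
        (\<exists>n g. poset_quotient (P n) (le n) X leX g)) \<and>
     (\<forall>k (Y::nat set) leY f. finite_poset Y leY \<and> poset_quotient Y leY (P k) (le k) f \<longrightarrow>
        (\<exists>l g. k < l \<and> poset_quotient (P l) (le l) Y leY g \<and>
               (\<forall>x\<in>P l. f (g x) = p l k x)))"

definition inv_limit :: "(nat \<Rightarrow> 'a set) \<Rightarrow> (nat \<Rightarrow> nat \<Rightarrow> 'a \<Rightarrow> 'a) \<Rightarrow> (nat \<Rightarrow> 'a) set" where
  "inv_limit P p = {x. (\<forall>n. x n \<in> P n) \<and> (\<forall>n. p (Suc n) n (x (Suc n)) = x n)}"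

definition lim_le :: "(nat \<Rightarrow> 'a \<Rightarrow> 'a \<Rightarrow> bool) \<Rightarrow> (nat \<Rightarrow> 'a) \<Rightarrow> (nat \<Rightarrow> 'a) \<Rightarrow> bool" where
  "lim_le le x y \<longleftrightarrow> (\<forall>n. le n (x n) (y n))"

definition lim_top :: "(nat \<Rightarrow> 'a set) \<Rightarrow> (nat \<Rightarrow> nat \<Rightarrow> 'a \<Rightarrow> 'a) \<Rightarrow> (nat \<Rightarrow> 'a) topology" where
  "lim_top P p = subtopology (product_topology (\<lambda>n. discrete_topology (P n)) UNIV) (inv_limit P p)"

definition down :: "'a set \<Rightarrow> ('a \<Rightarrow> 'a \<Rightarrow> bool) \<Rightarrow> 'a \<Rightarrow> 'a set" where
  "down X le x = {m \<in> X. le m x}"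

definition downsets :: "'a set \<Rightarrow> ('a \<Rightarrow> 'a \<Rightarrow> bool) \<Rightarrow> 'a set set" where
  "downsets X le = {A. A \<subseteq> X \<and> (\<forall>x\<in>A. \<forall>y\<in>X. le y x \<longrightarrow> y \<in> A)}"

definition maximals :: "('a \<Rightarrow> 'a \<Rightarrow> bool) \<Rightarrow> 'a set \<Rightarrow> 'a set" where
  "maximals le A = {a \<in> A. \<forall>b\<in>A. le a b \<longrightarrow> b = a}"

definition hat :: "('a \<Rightarrow> 'a \<Rightarrow> bool) \<Rightarrow> 'b set \<Rightarrow> ('b \<Rightarrow> 'b \<Rightarrow> bool) \<Rightarrow> ('a \<Rightarrow> 'b) \<Rightarrow> 'a set \<Rightarrow> 'b set" where
  "hat leQ R leR p A = (\<Union>a\<in>maximals leQ A. down R leR (p a))"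

definition Olat :: "(nat \<Rightarrow> 'a set) \<Rightarrow> (nat \<Rightarrow> 'a \<Rightarrow> 'a \<Rightarrow> bool) \<Rightarrow> (nat \<Rightarrow> nat \<Rightarrow> 'a \<Rightarrow> 'a) \<Rightarrow> (nat \<Rightarrow> 'a set) set" where
  "Olat P le p = {A. (\<forall>n. A n \<in> downsets (P n) (le n)) \<and>
      (\<forall>n. hat (le (Suc n)) (P n) (le n) (p (Suc n) n) (A (Suc n)) = A n)}"

definition Olat_le :: "(nat \<Rightarrow> 'a set) \<Rightarrow> (nat \<Rightarrow> 'a set) \<Rightarrow> bool" where
  "Olat_le A B \<longleftrightarrow> (\<forall>n. A n \<subseteq> B n)"

definition Olat_top :: "(nat \<Rightarrow> 'a set) \<Rightarrow> (nat \<Rightarrow> 'a \<Rightarrow> 'a \<Rightarrow> bool) \<Rightarrow> (nat \<Rightarrow> nat \<Rightarrow> 'a \<Rightarrow> 'a) \<Rightarrow> (nat \<Rightarrow> 'a set) topology" where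
  "Olat_top P le p = subtopology (product_topology (\<lambda>n. discrete_topology (downsets (P n) (le n))) UNIV) (Olat P le p)"

definition down_map :: "(nat \<Rightarrow> 'a set) \<Rightarrow> (nat \<Rightarrow> 'a \<Rightarrow> 'a \<Rightarrow> bool) \<Rightarrow> (nat \<Rightarrow> 'a) \<Rightarrow> (nat \<Rightarrow> 'a set)" where
  "down_map P le x = (\<lambda>n. down (P n) (le n) (x n))"

end

theory Submission
  imports Defs
begin


lemma dec_chain_ne:
  fixes F :: "nat \<Rightarrow> 'c set"
  assumes dec: "\<And>d. F (Suc d) \<subseteq> F d" and ne: "\<And>d. F d \<noteq> {}" and fin: "finite (F 0)"
  shows "\<exists>c. \<forall>d. c \<in> F d"
proof -
  have sub: "d \<le> d' \<Longrightarrow> F d' \<subseteq> F d" for d d'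
    by (rule lift_Suc_antimono_le[of F, OF dec])
  have finF: "finite (F d)" for d using sub[of 0 d] fin finite_subset by blast
  define n where "n = (LEAST k. \<exists>d. card (F d) = k)"
  obtain d0 where d0: "card (F d0) = n" unfolding n_def
    using LeastI_ex[of "\<lambda>k. \<exists>d. card (F d) = k"] by blast
  have mn: "card (F d0) \<le> card (F d)" for d unfolding d0 n_def by (rule Least_le) blast
  obtain c where c: "c \<in> F d0" using ne by blast
  have "c \<in> F d" for d
  proof (cases "d0 \<le> d")
    case True
    have "card (F d) = card (F d0)" using card_mono[OF finF[of d0] sub[OF True]] mn[of d] by linarith
    then have "F d = F d0" using card_subset_eq[OF finF[of d0] sub[OF True]] by simp
    then show ?thesis using c by simp
  next
    case False
    then show ?thesis using sub[of d d0] c by auto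
  qed
  then show ?thesis by blast
qed

fun itr :: "(nat \<Rightarrow> 'c \<Rightarrow> 'c) \<Rightarrow> nat \<Rightarrow> nat \<Rightarrow> 'c \<Rightarrow> 'c" where
  "itr r k 0 c = c" | "itr r k (Suc d) c = r k (itr r (Suc k) d c)"

lemma itr_Suc2: "itr r k (Suc d) c = itr r k d (r (k+d) c)"
  by (induction d arbitrary: k) auto

lemma konig:
  fixes Q :: "nat \<Rightarrow> 'c set" and r :: "nat \<Rightarrow> 'c \<Rightarrow> 'c"
  assumes fin: "\<And>k. finite (Q k)" and ne: "\<And>k. Q k \<noteq> {}"
    and cmp: "\<And>k c. c \<in> Q (Suc k) \<Longrightarrow> r k c \<in> Q k"
  shows "\<exists>x. \<forall>k. x k \<in> Q k \<and> r k (x (Suc k)) = x k"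
proof -
  define F where "F k d = itr r k d ` Q (k+d)" for k d
  have Fdec: "F k (Suc d) \<subseteq> F k d" for k d
  proof
    fix c assume "c \<in> F k (Suc d)"
    then obtain c0 where c0: "c0 \<in> Q (Suc (k+d))" "c = itr r k d (r (k+d) c0)"
      unfolding F_def by (auto simp del: itr.simps simp: itr_Suc2)
    then show "c \<in> F k d" unfolding F_def using cmp by auto
  qed
  have Fne: "F k d \<noteq> {}" for k d unfolding F_def using ne by auto
  have F0: "F k 0 = Q k" for k unfolding F_def by simp
  define T where "T k = (\<Inter>d. F k d)" for k
  have Tne: "\<exists>c. c \<in> T k" for k
    using dec_chain_ne[of "F k", OF Fdec Fne] F0 fin unfolding T_def by auto
  have TQ: "T k \<subseteq> Q k" for k unfolding T_def using F0 by blast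
  have step: "\<exists>c'. c' \<in> T (Suc k) \<and> r k c' = c" if c: "c \<in> T k" for k c
  proof -
    define L where "L d = {c' \<in> F (Suc k) d. r k c' = c}" for d
    have "L (Suc d) \<subseteq> L d" for d unfolding L_def using Fdec by auto
    moreover have "L d \<noteq> {}" for d
    proof -
      have "c \<in> F k (Suc d)" using c unfolding T_def by blast
      then obtain c0 where "c0 \<in> Q (Suc k + d)" "c = r k (itr r (Suc k) d c0)"
        unfolding F_def by auto
      then show ?thesis unfolding L_def F_def by auto
    qed
    moreover have "finite (L 0)" unfolding L_def F0 using fin by auto
    ultimately obtain c' where "\<forall>d. c' \<in> L d" using dec_chain_ne[of L] by blast
    then show ?thesis unfolding L_def T_def by auto
  qed
  define nxt where "nxt k c = (SOME c'. c' \<in> T (Suc k) \<and> r k c' = c)" for k c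
  define x where "x = rec_nat (SOME c. c \<in> T 0) nxt"
  have xT: "x k \<in> T k" for k
  proof (induction k)
    case 0 then show ?case unfolding x_def using someI_ex[OF Tne[of 0]] by simp
  next
    case (Suc k)
    then show ?case unfolding x_def using step[of "x k" k] unfolding nxt_def x_def
      by (simp add: someI_ex) (metis (mono_tags, lifting) someI_ex)
  qed
  have "r k (x (Suc k)) = x k" for k
    using step[OF xT[of k]] unfolding x_def nxt_def apply simp by (metis (mono_tags, lifting) someI_ex)
  then show ?thesis using xT TQ by blast
qed




definition Cset :: "(nat \<Rightarrow> 'a set) \<Rightarrow> (nat \<Rightarrow> nat \<Rightarrow> 'a \<Rightarrow> 'a) \<Rightarrow> (nat \<Rightarrow> 'a set) \<Rightarrow> (nat \<Rightarrow> 'a) set" where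
  "Cset P p A = {x \<in> inv_limit P p. \<forall>k. x k \<in> A k}"

definition dimg :: "(nat \<Rightarrow> 'a set) \<Rightarrow> (nat \<Rightarrow> 'a \<Rightarrow> 'a \<Rightarrow> bool) \<Rightarrow> (nat \<Rightarrow> 'a) set \<Rightarrow> (nat \<Rightarrow> 'a set)" where
  "dimg P le S = (\<lambda>n. {b \<in> P n. \<exists>y\<in>S. le n b (y n)})"

locale invsys =
  fixes P :: "nat \<Rightarrow> 'a set" and le :: "nat \<Rightarrow> 'a \<Rightarrow> 'a \<Rightarrow> bool" and p :: "nat \<Rightarrow> nat \<Rightarrow> 'a \<Rightarrow> 'a"
  assumes sys: "inv_system P le p"
begin

lemma fp: "finite_poset (P n) (le n)"
  using conjunct1[OF sys[unfolded inv_system_def]] by (rule spec)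
lemma fin: "finite (P n)" using fp[of n] unfolding finite_poset_def by (elim conjE)
lemma refl: "x \<in> P n \<Longrightarrow> le n x x" using fp[of n] unfolding finite_poset_def by (elim conjE) blast
lemma antisym: "x \<in> P n \<Longrightarrow> y \<in> P n \<Longrightarrow> le n x y \<Longrightarrow> le n y x \<Longrightarrow> x = y"
  using fp[of n] unfolding finite_poset_def by (elim conjE) blast
lemma trans: "x \<in> P n \<Longrightarrow> y \<in> P n \<Longrightarrow> z \<in> P n \<Longrightarrow> le n x y \<Longrightarrow> le n y z \<Longrightarrow> le n x z"
  using fp[of n] unfolding finite_poset_def by (elim conjE) blast
lemma quot: "k < m \<Longrightarrow> poset_quotient (P m) (le m) (P k) (le k) (p m k)"
  using conjunct1[OF conjunct2[OF sys[unfolded inv_system_def]]] by blast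
lemma comp: "l < k \<Longrightarrow> k < m \<Longrightarrow> x \<in> P m \<Longrightarrow> p k l (p m k x) = p m l x"
  using conjunct2[OF conjunct2[OF sys[unfolded inv_system_def]]] by blast

definition pr where "pr m k x = (if k < m then p m k x else x)"

lemma pr_same[simp]: "pr m m x = x" unfolding pr_def by simp

lemma p_in: "k < m \<Longrightarrow> x \<in> P m \<Longrightarrow> p m k x \<in> P k"
  using quot[of k m] unfolding poset_quotient_def by (metis imageI)

lemma pr_in: "x \<in> P m \<Longrightarrow> k \<le> m \<Longrightarrow> pr m k x \<in> P k"
  using p_in unfolding pr_def by auto

lemma pr_surj: "b \<in> P k \<Longrightarrow> k \<le> m \<Longrightarrow> \<exists>a\<in>P m. pr m k a = b"
proof (cases "k < m")
  case True
  assume "b \<in> P k"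
  then show ?thesis using True quot[of k m] unfolding pr_def poset_quotient_def by (metis imageE)
qed (auto simp: pr_def)

lemma pr_mono: "x \<in> P m \<Longrightarrow> y \<in> P m \<Longrightarrow> le m x y \<Longrightarrow> k \<le> m \<Longrightarrow> le k (pr m k x) (pr m k y)"
proof (cases "k < m")
  case True
  assume "x \<in> P m" "y \<in> P m" "le m x y"
  moreover have "\<forall>x\<in>P m. \<forall>y\<in>P m. le m x y \<longrightarrow> le k (p m k x) (p m k y)"
    using quot[OF True] unfolding poset_quotient_def by blast
  ultimately show ?thesis using True unfolding pr_def by simp
qed (simp add: pr_def)

lemma pr_lift: "a \<in> P k \<Longrightarrow> b \<in> P k \<Longrightarrow> le k a b \<Longrightarrow> k \<le> m \<Longrightarrow>
   \<exists>x\<in>P m. \<exists>y\<in>P m. le m x y \<and> pr m k x = a \<and> pr m k y = b"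
proof (cases "k < m")
  case True
  assume "a \<in> P k" "b \<in> P k" "le k a b"
  moreover have "\<forall>a\<in>P k. \<forall>b\<in>P k. le k a b \<longrightarrow> (\<exists>x\<in>P m. \<exists>y\<in>P m. le m x y \<and> p m k x = a \<and> p m k y = b)"
    using quot[OF True] unfolding poset_quotient_def by blast
  ultimately show ?thesis using True unfolding pr_def by simp
next
  case False
  assume "a \<in> P k" "b \<in> P k" "le k a b" "k \<le> m"
  then show ?thesis using False unfolding pr_def by auto
qed

lemma pr_comp: "l \<le> k \<Longrightarrow> k \<le> m \<Longrightarrow> x \<in> P m \<Longrightarrow> pr k l (pr m k x) = pr m l x"
proof -
  assume a: "l \<le> k" "k \<le> m" "x \<in> P m"
  show ?thesis
  proof (cases "l = k")
    case True then show ?thesis by simp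
  next
    case F1: False
    show ?thesis
    proof (cases "k = m")
      case True then show ?thesis by simp
    next
      case False
      then have "l < k" "k < m" using a F1 by auto
      then show ?thesis using comp[OF _ _ a(3)] unfolding pr_def by simp
    qed
  qed
qed

lemma pr_Suc: "c \<in> P (Suc j) \<Longrightarrow> m \<le> j \<Longrightarrow> pr (Suc j) m c = pr j m (p (Suc j) j c)"
proof (cases "m = j")
  case True then show ?thesis unfolding pr_def by simp
next
  case False
  assume "c \<in> P (Suc j)" "m \<le> j"
  then show ?thesis using comp[of m j "Suc j" c] False unfolding pr_def by simp
qed

abbreviation lim where "lim \<equiv> inv_limit P p"

lemma lim_in: "x \<in> lim \<Longrightarrow> x n \<in> P n" unfolding inv_limit_def by blast
lemma lim_step: "x \<in> lim \<Longrightarrow> p (Suc n) n (x (Suc n)) = x n" unfolding inv_limit_def by blast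

lemma thread: "x \<in> lim \<Longrightarrow> k \<le> m \<Longrightarrow> pr m k (x m) = x k"
proof (induction m)
  case 0 then show ?case by simp
next
  case (Suc m)
  show ?case
  proof (cases "k = Suc m")
    case True then show ?thesis by simp
  next
    case False
    then have "k \<le> m" using Suc by simp
    then have "pr (Suc m) k (x (Suc m)) = pr m k (p (Suc m) m (x (Suc m)))"
      using pr_Suc[OF lim_in[OF Suc(2)], of k m] by simp
    also have "\<dots> = pr m k (x m)" using lim_step[OF Suc(2), of m] by simp
    also have "\<dots> = x k" using Suc.IH[OF Suc(2) \<open>k \<le> m\<close>] .
    finally show ?thesis .
  qed
qed

lemma shift:
  assumes yP: "\<And>k. y k \<in> P (m+k)" and yc: "\<And>k. p (Suc (m+k)) (m+k) (y (Suc k)) = y k"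
  shows "\<exists>x\<in>lim. \<forall>k. x (m+k) = y k"
proof -
  define x where "x n = (if m \<le> n then y (n-m) else pr m n (y 0))" for n
  have "x \<in> lim"
    unfolding inv_limit_def
  proof (intro CollectI conjI allI)
    fix n
    show "x n \<in> P n" unfolding x_def using yP[of "n-m"] pr_in[OF yP[of 0], of n] by auto
    show "p (Suc n) n (x (Suc n)) = x n"
    proof (cases "m \<le> n")
      case True
      then have "Suc n - m = Suc (n-m)" "m + (n-m) = n" by auto
      then show ?thesis unfolding x_def using True yc[of "n-m"] by simp
    next
      case False
      show ?thesis
      proof (cases "Suc n = m")
        case True then show ?thesis unfolding x_def pr_def by auto
      next
        case F2: False
        then have "Suc n < m" using False by simp
        then show ?thesis unfolding x_def using pr_comp[of n "Suc n" m "y 0"] yP[of 0]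
          unfolding pr_def by auto
      qed
    qed
  qed
  moreover have "x (m+k) = y k" for k unfolding x_def by simp
  ultimately show ?thesis by blast
qed

lemma konig_from:
  assumes QP: "\<And>k. Q k \<subseteq> P (m+k)" and ne: "\<And>k. Q k \<noteq> {}"
    and cmp: "\<And>k c. c \<in> Q (Suc k) \<Longrightarrow> p (Suc (m+k)) (m+k) c \<in> Q k"
  shows "\<exists>x\<in>lim. \<forall>k. x (m+k) \<in> Q k"
proof -
  have finQ: "finite (Q k)" for k using QP[of k] fin finite_subset by blast
  obtain y where y: "\<forall>k. y k \<in> Q k \<and> p (Suc (m+k)) (m+k) (y (Suc k)) = y k"
    using konig[of Q "\<lambda>k. p (Suc (m+k)) (m+k)", OF finQ ne cmp] by blast
  have yQ: "y k \<in> Q k" for k using y by blast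
  have yc: "p (Suc (m+k)) (m+k) (y (Suc k)) = y k" for k using y by blast
  have yP: "y k \<in> P (m+k)" for k using QP[of k] yQ[of k] by (rule subsetD)
  obtain x where "x \<in> lim" "\<forall>k. x (m+k) = y k" using shift[of y m, OF yP yc] by blast
  moreover note yQ
  ultimately show ?thesis by (intro bexI[where x=x]) auto
qed

lemma konig_pairs:
  assumes QP: "\<And>k. Q k \<subseteq> P (m+k) \<times> P (m+k)" and ne: "\<And>k. Q k \<noteq> {}"
    and cmp: "\<And>k c d. (c,d) \<in> Q (Suc k) \<Longrightarrow> (p (Suc (m+k)) (m+k) c, p (Suc (m+k)) (m+k) d) \<in> Q k"
  shows "\<exists>x\<in>lim. \<exists>y\<in>lim. \<forall>k. (x (m+k), y (m+k)) \<in> Q k"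
proof -
  have finQ: "finite (Q k)" for k using QP[of k] fin finite_subset by blast
  have cmp': "map_prod (p (Suc (m+k)) (m+k)) (p (Suc (m+k)) (m+k)) c \<in> Q k" if "c \<in> Q (Suc k)" for k c
    using cmp[of "fst c" "snd c" k] that by (cases c) simp
  obtain z where z: "\<forall>k. z k \<in> Q k \<and> map_prod (p (Suc (m+k)) (m+k)) (p (Suc (m+k)) (m+k)) (z (Suc k)) = z k"
    using konig[of Q "\<lambda>k. map_prod (p (Suc (m+k)) (m+k)) (p (Suc (m+k)) (m+k))", OF finQ ne cmp'] by blast
  have zQ: "z k \<in> Q k" for k using z by blast
  have zc: "map_prod (p (Suc (m+k)) (m+k)) (p (Suc (m+k)) (m+k)) (z (Suc k)) = z k" for k using z by blast
  have "z k \<in> P (m+k) \<times> P (m+k)" for k using QP[of k] zQ[of k] by (rule subsetD)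
  then have A1: "fst (z k) \<in> P (m+k)" and A2: "snd (z k) \<in> P (m+k)" for k by (auto simp: mem_Times_iff)
  have B1: "p (Suc (m+k)) (m+k) (fst (z (Suc k))) = fst (z k)" for k
    using arg_cong[OF zc[of k], of fst] by simp
  have B2: "p (Suc (m+k)) (m+k) (snd (z (Suc k))) = snd (z k)" for k
    using arg_cong[OF zc[of k], of snd] by simp
  obtain x where "x \<in> lim" "\<forall>k. x (m+k) = fst (z k)"
    using shift[of "\<lambda>k. fst (z k)" m, OF A1 B1] by blast
  moreover obtain y where "y \<in> lim" "\<forall>k. y (m+k) = snd (z k)"
    using shift[of "\<lambda>k. snd (z k)" m, OF A2 B2] by blast
  ultimately have "x \<in> lim" "\<forall>k. x (m+k) = fst (z k)" "y \<in> lim" "\<forall>k. y (m+k) = snd (z k)" by blast+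
  then show ?thesis apply - apply (rule bexI[of _ x], rule bexI[of _ y]) using zQ by auto
qed

lemma lift_point: "a \<in> P m \<Longrightarrow> \<exists>x\<in>lim. x m = a"
proof -
  assume a: "a \<in> P m"
  define Q where "Q k = {c \<in> P (m+k). pr (m+k) m c = a}" for k
  have QP: "Q k \<subseteq> P (m+k)" for k unfolding Q_def by blast
  have ne: "Q k \<noteq> {}" for k
  proof -
    obtain c where "c \<in> P (m+k)" "pr (m+k) m c = a" using pr_surj[OF a, of "m+k"] by auto
    then show ?thesis unfolding Q_def by blast
  qed
  have cmp: "p (Suc (m+k)) (m+k) c \<in> Q k" if c: "c \<in> Q (Suc k)" for k c
  proof -
    have c1: "c \<in> P (Suc (m+k))" "pr (Suc (m+k)) m c = a" using c unfolding Q_def by auto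
    have "p (Suc (m+k)) (m+k) c \<in> P (m+k)" using p_in c1 by simp
    moreover have "pr (m+k) m (p (Suc (m+k)) (m+k) c) = a" using pr_Suc[OF c1(1), of m] c1 by simp
    ultimately show ?thesis unfolding Q_def by blast
  qed
  obtain x where x: "x \<in> lim" "\<forall>k. x (m+k) \<in> Q k" using konig_from[OF QP ne cmp] by blast
  have "x (m+0) \<in> Q 0" using x by blast
  then have "x m = a" unfolding Q_def by simp
  then show ?thesis using x by blast
qed

lemma lift_pair: "a \<in> P m \<Longrightarrow> b \<in> P m \<Longrightarrow> le m a b \<Longrightarrow> \<exists>x\<in>lim. \<exists>y\<in>lim. x m = a \<and> y m = b \<and> lim_le le x y"
proof -
  assume a: "a \<in> P m" and b: "b \<in> P m" and ab: "le m a b"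
  define Q where "Q k = {cd. fst cd \<in> P (m+k) \<and> snd cd \<in> P (m+k) \<and> le (m+k) (fst cd) (snd cd) \<and> pr (m+k) m (fst cd) = a \<and> pr (m+k) m (snd cd) = b}" for k
  have QP: "Q k \<subseteq> P (m+k) \<times> P (m+k)" for k unfolding Q_def by (auto simp: mem_Times_iff)
  have ne: "Q k \<noteq> {}" for k
  proof -
    obtain x y where "x \<in> P (m+k)" "y \<in> P (m+k)" "le (m+k) x y" "pr (m+k) m x = a" "pr (m+k) m y = b"
      using pr_lift[OF a b ab, of "m+k"] by auto
    then have "(x,y) \<in> Q k" unfolding Q_def by simp
    then show ?thesis by blast
  qed
  have cmp: "(p (Suc (m+k)) (m+k) c, p (Suc (m+k)) (m+k) d) \<in> Q k" if cd: "(c,d) \<in> Q (Suc k)" for k c d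
  proof -
    have c: "c \<in> P (Suc (m+k))" "d \<in> P (Suc (m+k))" "le (Suc (m+k)) c d"
      "pr (Suc (m+k)) m c = a" "pr (Suc (m+k)) m d = b" using cd unfolding Q_def by auto
    have e: "p (Suc (m+k)) (m+k) c = pr (Suc (m+k)) (m+k) c" "p (Suc (m+k)) (m+k) d = pr (Suc (m+k)) (m+k) d"
      unfolding pr_def by auto
    have "p (Suc (m+k)) (m+k) c \<in> P (m+k)" "p (Suc (m+k)) (m+k) d \<in> P (m+k)" using p_in c by auto
    moreover have "le (m+k) (p (Suc (m+k)) (m+k) c) (p (Suc (m+k)) (m+k) d)"
      unfolding e using pr_mono[OF c(1,2,3), of "m+k"] by simp
    moreover have "pr (m+k) m (p (Suc (m+k)) (m+k) c) = a" "pr (m+k) m (p (Suc (m+k)) (m+k) d) = b"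
      using pr_Suc[OF c(1), of m] pr_Suc[OF c(2), of m] c(4,5) by auto
    ultimately show ?thesis unfolding Q_def by simp
  qed
  obtain x y where xy: "x \<in> lim" "y \<in> lim" "\<forall>k. (x (m+k), y (m+k)) \<in> Q k"
    using konig_pairs[OF QP ne cmp] by blast
  have "(x (m+0), y (m+0)) \<in> Q 0" using xy(3) by blast
  then have xm: "x m = a" "y m = b" unfolding Q_def by auto
  have "le n (x n) (y n)" for n
  proof (cases "m \<le> n")
    case True
    then obtain k where k: "n = m + k" using le_Suc_ex by blast
    have "(x (m+k), y (m+k)) \<in> Q k" using xy(3) by blast
    then show ?thesis unfolding Q_def k by simp
  next
    case False
    then have "le n (pr m n (x m)) (pr m n (y m))" using pr_mono[OF a b ab, of n] xm by simp
    then show ?thesis using thread[OF xy(1), of n m] thread[OF xy(2), of n m] False by simp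
  qed
  then show ?thesis using xy(1,2) xm unfolding lim_le_def by blast
qed

end



context invsys begin

lemma max_above:
  assumes XP: "X \<subseteq> P n" and c: "c \<in> X"
  shows "\<exists>d\<in>maximals (le n) X. le n c d"
proof -
  define D where "D d = {e \<in> X. le n e d}" for d
  define S where "S = {d \<in> X. le n c d}"
  have finX: "finite X" using XP fin finite_subset by blast
  have finS: "finite S" unfolding S_def using finX by simp
  have cP: "c \<in> P n" using XP c by blast
  have "c \<in> S" unfolding S_def using c refl[OF cP] by simp
  then have Sne: "S \<noteq> {}" by blast
  define M where "M = Max ((\<lambda>d. card (D d)) ` S)"
  have "M \<in> (\<lambda>d. card (D d)) ` S" unfolding M_def using finS Sne by (intro Max_in) auto
  then obtain d where d: "d \<in> S" "card (D d) = M" by blast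
  have Mge: "card (D e) \<le> M" if "e \<in> S" for e unfolding M_def using finS that by (intro Max_ge) auto
  have dX: "d \<in> X" and cd: "le n c d" using d unfolding S_def by auto
  have dP: "d \<in> P n" using dX XP by blast
  have "\<forall>b\<in>X. le n d b \<longrightarrow> b = d"
  proof (intro ballI impI)
    fix b assume bX: "b \<in> X" and db: "le n d b"
    have bP: "b \<in> P n" using bX XP by blast
    show "b = d"
    proof (rule ccontr)
      assume bd: "b \<noteq> d"
      have sub: "D d \<subseteq> D b" unfolding D_def using trans[OF _ dP bP _ db] XP by blast
      have "b \<in> D b" unfolding D_def using bX refl[OF bP] by simp
      moreover have "b \<notin> D d" unfolding D_def using antisym[OF bP dP _ db] bd by blast
      ultimately have "D d \<subset> D b" using sub by blast
      moreover have "finite (D b)" unfolding D_def using finX by simp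
      ultimately have "card (D d) < card (D b)" by (rule psubset_card_mono[rotated])
      moreover have "b \<in> S" unfolding S_def using bX trans[OF cP dP bP cd db] by simp
      ultimately show False using Mge[of b] d by simp
    qed
  qed
  then have "d \<in> maximals (le n) X" unfolding maximals_def using dX by blast
  then show ?thesis using cd by blast
qed

lemma hat_eq:
  assumes XP: "X \<subseteq> P (Suc n)"
  shows "hat (le (Suc n)) (P n) (le n) (p (Suc n) n) X = {b \<in> P n. \<exists>c\<in>X. le n b (p (Suc n) n c)}"
proof
  show "hat (le (Suc n)) (P n) (le n) (p (Suc n) n) X \<subseteq> {b \<in> P n. \<exists>c\<in>X. le n b (p (Suc n) n c)}"
    unfolding hat_def down_def maximals_def by blast
next
  show "{b \<in> P n. \<exists>c\<in>X. le n b (p (Suc n) n c)} \<subseteq> hat (le (Suc n)) (P n) (le n) (p (Suc n) n) X"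
  proof
    fix b assume "b \<in> {b \<in> P n. \<exists>c\<in>X. le n b (p (Suc n) n c)}"
    then obtain c where bP: "b \<in> P n" and cX: "c \<in> X" and bc: "le n b (p (Suc n) n c)" by blast
    obtain d where d: "d \<in> maximals (le (Suc n)) X" "le (Suc n) c d" using max_above[OF XP cX] by blast
    have dX: "d \<in> X" using d(1) unfolding maximals_def by blast
    have cP: "c \<in> P (Suc n)" "d \<in> P (Suc n)" using cX dX XP by auto
    have "le n (pr (Suc n) n c) (pr (Suc n) n d)" using pr_mono[OF cP d(2)] by simp
    then have cd: "le n (p (Suc n) n c) (p (Suc n) n d)" unfolding pr_def by simp
    have "le n b (p (Suc n) n d)" using trans[OF bP p_in[OF _ cP(1)] p_in[OF _ cP(2)] bc cd] by simp
    then have "b \<in> down (P n) (le n) (p (Suc n) n d)" unfolding down_def using bP by simp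
    then show "b \<in> hat (le (Suc n)) (P n) (le n) (p (Suc n) n) X" unfolding hat_def using d(1) by blast
  qed
qed

lemma Olat_ds: "A \<in> Olat P le p \<Longrightarrow> A n \<in> downsets (P n) (le n)"
  unfolding Olat_def by blast
lemma Olat_sub: "A \<in> Olat P le p \<Longrightarrow> A n \<subseteq> P n"
  using Olat_ds unfolding downsets_def by blast
lemma Olat_down: "A \<in> Olat P le p \<Longrightarrow> b \<in> A n \<Longrightarrow> a \<in> P n \<Longrightarrow> le n a b \<Longrightarrow> a \<in> A n"
  using Olat_ds[of A n] unfolding downsets_def by blast
lemma Olat_step: "A \<in> Olat P le p \<Longrightarrow> A n = {b \<in> P n. \<exists>c\<in>A (Suc n). le n b (p (Suc n) n c)}"
proof -
  assume A: "A \<in> Olat P le p"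
  then have "hat (le (Suc n)) (P n) (le n) (p (Suc n) n) (A (Suc n)) = A n" unfolding Olat_def by blast
  then show ?thesis using hat_eq[OF Olat_sub[OF A, of "Suc n"]] by simp
qed
lemma Olat_img: "A \<in> Olat P le p \<Longrightarrow> c \<in> A (Suc n) \<Longrightarrow> p (Suc n) n c \<in> A n"
proof -
  assume A: "A \<in> Olat P le p" and c: "c \<in> A (Suc n)"
  have cP: "c \<in> P (Suc n)" using Olat_sub[OF A] c by blast
  have pc: "p (Suc n) n c \<in> P n" using p_in[OF _ cP] by simp
  have "p (Suc n) n c \<in> {b \<in> P n. \<exists>c\<in>A (Suc n). le n b (p (Suc n) n c)}"
    using pc c refl[OF pc] by blast
  then show ?thesis using Olat_step[OF A, of n] by simp
qed

lemma Olat_thread: "A \<in> Olat P le p \<Longrightarrow> x \<in> lim \<Longrightarrow> x m \<in> A m \<Longrightarrow> k \<le> m \<Longrightarrow> x k \<in> A k"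
proof (induction m)
  case 0 then show ?case by simp
next
  case (Suc m)
  show ?case
  proof (cases "k = Suc m")
    case True then show ?thesis using Suc by simp
  next
    case False
    have "x m \<in> A m" using Olat_img[OF Suc(2,4)] lim_step[OF Suc(3), of m] by simp
    then show ?thesis using Suc.IH[OF Suc(2,3)] Suc(5) False by simp
  qed
qed

lemma Cset_iff: "x \<in> Cset P p A \<longleftrightarrow> x \<in> lim \<and> (\<forall>k. x k \<in> A k)"
  unfolding Cset_def by blast

lemma Olat_lift:
  assumes A: "A \<in> Olat P le p" and a: "a \<in> A m"
  shows "\<exists>x\<in>Cset P p A. le m a (x m)"
proof -
  have aP: "a \<in> P m" using Olat_sub[OF A] a by blast
  define Q where "Q k = {c \<in> A (m+k). le m a (pr (m+k) m c)}" for k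
  have QP: "Q k \<subseteq> P (m+k)" for k unfolding Q_def using Olat_sub[OF A] by blast
  have ne: "Q k \<noteq> {}" for k
  proof (induction k)
    case 0
    have "a \<in> Q 0" unfolding Q_def using a refl[OF aP] by simp
    then show ?case by blast
  next
    case (Suc k)
    then obtain c where c: "c \<in> A (m+k)" "le m a (pr (m+k) m c)" unfolding Q_def by blast
    then obtain c' where c': "c' \<in> A (Suc (m+k))" "le (m+k) c (p (Suc (m+k)) (m+k) c')"
      using Olat_step[OF A, of "m+k"] by blast
    have cP: "c \<in> P (m+k)" using c(1) Olat_sub[OF A] by blast
    have c'P: "c' \<in> P (Suc (m+k))" using c'(1) Olat_sub[OF A] by blast
    have pc'P: "p (Suc (m+k)) (m+k) c' \<in> P (m+k)" using p_in[OF _ c'P] by simp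
    have e: "pr (Suc (m+k)) m c' = pr (m+k) m (p (Suc (m+k)) (m+k) c')" using pr_Suc[OF c'P, of m] by simp
    have "le m (pr (m+k) m c) (pr (m+k) m (p (Suc (m+k)) (m+k) c'))"
      using pr_mono[OF cP pc'P c'(2), of m] by simp
    then have "le m a (pr (Suc (m+k)) m c')"
      using trans[OF aP pr_in[OF cP, of m] pr_in[OF pc'P, of m] c(2)] e by simp
    then have "c' \<in> Q (Suc k)" unfolding Q_def using c'(1) by simp
    then show ?case by blast
  qed
  have cmp: "p (Suc (m+k)) (m+k) c \<in> Q k" if c: "c \<in> Q (Suc k)" for k c
  proof -
    have c1: "c \<in> A (Suc (m+k))" "le m a (pr (Suc (m+k)) m c)" using c unfolding Q_def by auto
    have cP: "c \<in> P (Suc (m+k))" using c1(1) Olat_sub[OF A] by blast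
    have "p (Suc (m+k)) (m+k) c \<in> A (m+k)" using Olat_img[OF A c1(1)] .
    moreover have "le m a (pr (m+k) m (p (Suc (m+k)) (m+k) c))" using c1(2) pr_Suc[OF cP, of m] by simp
    ultimately show ?thesis unfolding Q_def by simp
  qed
  obtain x where x: "x \<in> lim" "\<forall>k. x (m+k) \<in> Q k" using konig_from[OF QP ne cmp] by blast
  have x0: "x m \<in> Q 0" using x(2) by (metis add_0_right)
  then have xm: "x m \<in> A m" "le m a (x m)" unfolding Q_def by auto
  have "x n \<in> A n" for n
  proof (cases "m \<le> n")
    case True
    then obtain k where k: "n = m + k" using le_Suc_ex by blast
    have "x (m+k) \<in> Q k" using x(2) by blast
    then show ?thesis unfolding Q_def k by simp
  next
    case False
    then show ?thesis using Olat_thread[OF A x(1) xm(1), of n] by simp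
  qed
  then have "x \<in> Cset P p A" using x(1) Cset_iff by blast
  then show ?thesis using xm(2) by blast
qed

lemma dimg_iff: "b \<in> dimg P le S n \<longleftrightarrow> b \<in> P n \<and> (\<exists>y\<in>S. le n b (y n))"
  unfolding dimg_def by simp

lemma dimg_Olat:
  assumes S: "S \<subseteq> lim"
  shows "dimg P le S \<in> Olat P le p"
proof -
  have ds: "dimg P le S n \<in> downsets (P n) (le n)" for n
    unfolding downsets_def
  proof (intro CollectI conjI ballI impI)
    show "dimg P le S n \<subseteq> P n" using dimg_iff by blast
    fix x y assume x: "x \<in> dimg P le S n" and y: "y \<in> P n" and yx: "le n y x"
    then obtain z where z: "z \<in> S" "le n x (z n)" "x \<in> P n" using dimg_iff by blast
    have "z n \<in> P n" using S z(1) lim_in by blast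
    then have "le n y (z n)" using trans[OF y z(3) _ yx z(2)] by simp
    then show "y \<in> dimg P le S n" using dimg_iff y z(1) by blast
  qed
  have hh: "hat (le (Suc n)) (P n) (le n) (p (Suc n) n) (dimg P le S (Suc n)) = dimg P le S n" for n
  proof -
    have sub: "dimg P le S (Suc n) \<subseteq> P (Suc n)" using dimg_iff by blast
    have "{b \<in> P n. \<exists>c\<in>dimg P le S (Suc n). le n b (p (Suc n) n c)} = dimg P le S n"
    proof (intro equalityI subsetI)
      fix b assume "b \<in> {b \<in> P n. \<exists>c\<in>dimg P le S (Suc n). le n b (p (Suc n) n c)}"
      then obtain c where bP: "b \<in> P n" and c: "c \<in> dimg P le S (Suc n)" and bc: "le n b (p (Suc n) n c)" by blast
      then obtain y where y: "y \<in> S" "le (Suc n) c (y (Suc n))" "c \<in> P (Suc n)" using dimg_iff by blast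
      have yl: "y \<in> lim" using S y(1) by blast
      have ySP: "y (Suc n) \<in> P (Suc n)" using lim_in[OF yl] .
      have "le n (pr (Suc n) n c) (pr (Suc n) n (y (Suc n)))" using pr_mono[OF y(3) ySP y(2)] by simp
      then have "le n (p (Suc n) n c) (y n)" unfolding pr_def using lim_step[OF yl, of n] by simp
      then have "le n b (y n)" using trans[OF bP p_in[OF _ y(3)] lim_in[OF yl] bc] by simp
      then show "b \<in> dimg P le S n" using dimg_iff bP y(1) by blast
    next
      fix b assume "b \<in> dimg P le S n"
      then obtain y where y: "y \<in> S" "le n b (y n)" and bP: "b \<in> P n" using dimg_iff by blast
      have yl: "y \<in> lim" using S y(1) by blast
      have "y (Suc n) \<in> dimg P le S (Suc n)" using dimg_iff y(1) lim_in[OF yl] refl[OF lim_in[OF yl]] by blast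
      moreover have "le n b (p (Suc n) n (y (Suc n)))" using y(2) lim_step[OF yl, of n] by simp
      ultimately show "b \<in> {b \<in> P n. \<exists>c\<in>dimg P le S (Suc n). le n b (p (Suc n) n c)}" using bP by blast
    qed
    then show ?thesis using hat_eq[OF sub] by simp
  qed
  show ?thesis unfolding Olat_def using ds hh by blast
qed

lemma dimg_Cset:
  assumes A: "A \<in> Olat P le p"
  shows "dimg P le (Cset P p A) = A"
proof (rule ext, intro equalityI subsetI)
  fix n b assume "b \<in> dimg P le (Cset P p A) n"
  then obtain y where y: "y \<in> Cset P p A" "le n b (y n)" and bP: "b \<in> P n" using dimg_iff by blast
  have "y n \<in> A n" using y(1) Cset_iff by blast
  then show "b \<in> A n" using Olat_down[OF A _ bP y(2)] by simp
next
  fix n b assume b: "b \<in> A n"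
  obtain x where "x \<in> Cset P p A" "le n b (x n)" using Olat_lift[OF A b] by blast
  moreover have "b \<in> P n" using b Olat_sub[OF A] by blast
  ultimately show "b \<in> dimg P le (Cset P p A) n" using dimg_iff by blast
qed

lemma Cset_dimg:
  assumes S: "S \<subseteq> lim"
    and down: "\<And>z y. z \<in> lim \<Longrightarrow> y \<in> S \<Longrightarrow> lim_le le z y \<Longrightarrow> z \<in> S"
    and closed: "\<And>z. z \<in> lim \<Longrightarrow> (\<And>m. \<exists>y\<in>S. y m = z m) \<Longrightarrow> z \<in> S"
  shows "Cset P p (dimg P le S) = S"
proof (intro equalityI subsetI)
  fix z assume z: "z \<in> S"
  then have zl: "z \<in> lim" using S by blast
  have "z k \<in> dimg P le S k" for k using dimg_iff z lim_in[OF zl] refl[OF lim_in[OF zl]] by blast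
  then show "z \<in> Cset P p (dimg P le S)" using Cset_iff zl by blast
next
  fix z assume "z \<in> Cset P p (dimg P le S)"
  then have zl: "z \<in> lim" and zk: "\<And>k. z k \<in> dimg P le S k" using Cset_iff by blast+
  define Q where "Q k = {c \<in> P k. (\<exists>y\<in>S. y k = c) \<and> le k (z k) c}" for k
  have QP: "Q k \<subseteq> P (0+k)" for k unfolding Q_def by auto
  have ne: "Q k \<noteq> {}" for k
  proof -
    obtain y where y: "y \<in> S" "le k (z k) (y k)" using zk[of k] dimg_iff by blast
    have "y k \<in> P k" using S y(1) lim_in by blast
    then have "y k \<in> Q k" unfolding Q_def using y by blast
    then show ?thesis by blast
  qed
  have cmp: "p (Suc (0+k)) (0+k) c \<in> Q k" if c: "c \<in> Q (Suc k)" for k c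
  proof -
    obtain y where y: "y \<in> S" "y (Suc k) = c" and cP: "c \<in> P (Suc k)" and zc: "le (Suc k) (z (Suc k)) c"
      using c unfolding Q_def by blast
    have yl: "y \<in> lim" using S y(1) by blast
    have e: "p (Suc k) k c = y k" using lim_step[OF yl, of k] y(2) by simp
    have "le k (pr (Suc k) k (z (Suc k))) (pr (Suc k) k c)" using pr_mono[OF lim_in[OF zl] cP zc] by simp
    then have "le k (z k) (y k)" unfolding pr_def using e lim_step[OF zl, of k] by simp
    then show ?thesis unfolding Q_def using e y(1) lim_in[OF yl, of k] by auto
  qed
  obtain w where w: "w \<in> lim" "\<forall>k. w (0+k) \<in> Q k" using konig_from[OF QP ne cmp] by blast
  have wQ: "w k \<in> Q k" for k using w(2) by simp
  have "w \<in> S"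
  proof (rule closed[OF w(1)])
    fix m show "\<exists>y\<in>S. y m = w m" using wQ[of m] unfolding Q_def by blast
  qed
  moreover have "lim_le le z w" unfolding lim_le_def using wQ unfolding Q_def by blast
  ultimately show "z \<in> S" using down[OF zl] by blast
qed

lemma Cset_union:
  assumes A: "A \<in> Olat P le p" and B: "B \<in> Olat P le p"
  shows "Cset P p (\<lambda>n. A n \<union> B n) = Cset P p A \<union> Cset P p B"
proof (intro equalityI subsetI)
  fix x assume "x \<in> Cset P p (\<lambda>n. A n \<union> B n)"
  then have xl: "x \<in> lim" and xk: "\<And>k. x k \<in> A k \<union> B k" unfolding Cset_def by simp_all
  show "x \<in> Cset P p A \<union> Cset P p B"
  proof (cases "\<forall>k. x k \<in> A k")
    case True
    then have "x \<in> Cset P p A" using Cset_iff xl by blast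
    then show ?thesis by (rule UnI1)
  next
    case False
    then obtain i where i: "x i \<notin> A i" by blast
    have "x k \<in> B k" for k
    proof -
      define K where "K = max i k"
      have ik: "i \<le> K" and kK: "k \<le> K" unfolding K_def by simp_all
      have "x K \<notin> A K"
      proof
        assume "x K \<in> A K"
        then have "x i \<in> A i" by (rule Olat_thread[OF A xl _ ik])
        then show False using i by contradiction
      qed
      then have "x K \<in> B K" using xk[of K] by blast
      then show "x k \<in> B k" by (rule Olat_thread[OF B xl _ kK])
    qed
    then have "x \<in> Cset P p B" using Cset_iff xl by blast
    then show ?thesis by (rule UnI2)
  qed
next
  fix x assume "x \<in> Cset P p A \<union> Cset P p B"
  then show "x \<in> Cset P p (\<lambda>n. A n \<union> B n)" unfolding Cset_def by blast
qed

lemma Cset_down_map: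
  assumes x: "x \<in> lim"
  shows "Cset P p (down_map P le x) = {y \<in> lim. lim_le le y x}"
proof (intro equalityI subsetI)
  fix y assume "y \<in> Cset P p (down_map P le x)"
  then have "y \<in> lim" "\<And>k. y k \<in> down_map P le x k" using Cset_iff by blast+
  then show "y \<in> {y \<in> lim. lim_le le y x}" unfolding down_map_def down_def lim_le_def by simp
next
  fix y assume "y \<in> {y \<in> lim. lim_le le y x}"
  then have yl: "y \<in> lim" and "\<And>k. le k (y k) (x k)" unfolding lim_le_def by auto
  then have "\<And>k. y k \<in> down_map P le x k" unfolding down_map_def down_def using lim_in[OF yl] by simp
  then show "y \<in> Cset P p (down_map P le x)" using Cset_iff yl by blast
qed

lemma Cset_mono: "(\<And>n. A n \<subseteq> B n) \<Longrightarrow> Cset P p A \<subseteq> Cset P p B"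
  unfolding Cset_def by blast

lemma dimg_mono: "S \<subseteq> T \<Longrightarrow> dimg P le S n \<subseteq> dimg P le T n"
  unfolding dimg_def by blast

end



lemma topspace_lim_top: "topspace (lim_top P p) = inv_limit P p"
  unfolding lim_top_def inv_limit_def by (auto simp: PiE_UNIV_domain)

lemma topspace_Olat_top: "topspace (Olat_top P le p) = Olat P le p"
  unfolding Olat_top_def Olat_def by (auto simp: PiE_UNIV_domain)

locale fsetup =
  P: invsys P leP p + H: invsys H leH h
  for P :: "nat \<Rightarrow> 'a set" and leP and p and H :: "nat \<Rightarrow> 'b set" and leH and h +
  fixes f :: "(nat \<Rightarrow> 'a) \<Rightarrow> (nat \<Rightarrow> 'b)"
  assumes f_quot: "poset_quotient (inv_limit P p) (lim_le leP) (inv_limit H h) (lim_le leH) f"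
    and f_cont: "continuous_map (lim_top P p) (lim_top H h) f"
begin

lemma f_img: "f ` P.lim = H.lim" using f_quot unfolding poset_quotient_def by blast
lemma f_in: "x \<in> P.lim \<Longrightarrow> f x \<in> H.lim" using f_img by blast
lemma f_mono: "x \<in> P.lim \<Longrightarrow> y \<in> P.lim \<Longrightarrow> lim_le leP x y \<Longrightarrow> lim_le leH (f x) (f y)"
  using f_quot unfolding poset_quotient_def by blast

lemma LC:
  assumes z: "z \<in> P.lim"
  shows "\<exists>m. \<forall>w\<in>P.lim. w m = z m \<longrightarrow> f w n = f z n"
proof -
  define c where "c = f z n"
  have cH: "c \<in> H n" unfolding c_def using H.lim_in[OF f_in[OF z]] .
  define XH where "XH = product_topology (\<lambda>n. discrete_topology (H n)) UNIV"
  define XP where "XP = product_topology (\<lambda>n. discrete_topology (P n)) UNIV"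
  define V where "V = {u \<in> topspace XH. u n \<in> {c}}"
  have "openin XH V" unfolding V_def XH_def
    by (rule openin_continuous_map_preimage[OF continuous_map_product_projection]) (use cH in auto)
  then have "openin (lim_top H h) (V \<inter> H.lim)" unfolding lim_top_def XH_def openin_subtopology by blast
  then have "openin (lim_top P p) {x \<in> topspace (lim_top P p). f x \<in> V \<inter> H.lim}"
    by (rule openin_continuous_map_preimage[OF f_cont])
  then obtain T where T: "openin XP T" and WT: "{x \<in> topspace (lim_top P p). f x \<in> V \<inter> H.lim} = T \<inter> P.lim"
    unfolding lim_top_def XP_def openin_subtopology by blast
  have "z \<in> T" using WT z f_in[OF z] unfolding V_def c_def XH_def topspace_lim_top
    by (auto simp: PiE_UNIV_domain H.lim_in)
  then obtain U where U: "finite {i \<in> UNIV. U i \<noteq> topspace (discrete_topology (P i))}"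
     "\<forall>i\<in>UNIV. openin (discrete_topology (P i)) (U i)" "z \<in> Pi\<^sub>E UNIV U" "Pi\<^sub>E UNIV U \<subseteq> T"
    using T unfolding XP_def openin_product_topology_alt by blast
  have "finite {i. U i \<noteq> P i}" using U(1) by simp
  then obtain m where m: "{i. U i \<noteq> P i} \<subseteq> {..<m}" using finite_nat_iff_bounded by blast
  have "f w n = f z n" if w: "w \<in> P.lim" "w m = z m" for w
  proof -
    have "w i \<in> U i" for i
    proof (cases "U i = P i")
      case True then show ?thesis using P.lim_in[OF w(1)] by simp
    next
      case False
      then have "i \<le> m" using m by auto
      then have "w i = z i" using P.thread[OF w(1), of i m] P.thread[OF z, of i m] w(2) by simp
      then show ?thesis using U(3) by (simp add: PiE_UNIV_domain Pi_iff)
    qed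
    then have "w \<in> T" using U(4) by (auto simp: PiE_UNIV_domain)
    then have "w \<in> {x \<in> topspace (lim_top P p). f x \<in> V \<inter> H.lim}" using WT w(1) by blast
    then show ?thesis unfolding V_def c_def by simp
  qed
  then show ?thesis by blast
qed

lemma UC: "\<exists>m. \<forall>x\<in>P.lim. \<forall>w\<in>P.lim. x m = w m \<longrightarrow> f x n = f w n"
proof (rule ccontr)
  assume nUC: "\<not> ?thesis"
  define Q where "Q k = {c \<in> P k. \<exists>m\<ge>k. \<exists>x\<in>P.lim. \<exists>w\<in>P.lim. x m = w m \<and> f x n \<noteq> f w n \<and> x k = c}" for k
  have QP: "Q k \<subseteq> P (0+k)" for k unfolding Q_def by auto
  have ne: "Q k \<noteq> {}" for k
  proof -
    obtain x w where xw: "x \<in> P.lim" "w \<in> P.lim" "x k = w k" "f x n \<noteq> f w n" using nUC by blast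
    then have "x k \<in> Q k" unfolding Q_def using P.lim_in[OF xw(1)] by blast
    then show ?thesis by blast
  qed
  have cmp: "p (Suc (0+k)) (0+k) c \<in> Q k" if c: "c \<in> Q (Suc k)" for k c
  proof -
    obtain m x w where mx: "m \<ge> Suc k" "x \<in> P.lim" "w \<in> P.lim" "x m = w m" "f x n \<noteq> f w n" "x (Suc k) = c"
      using c unfolding Q_def by blast
    have "p (Suc k) k c = x k" using P.lim_step[OF mx(2), of k] mx(6) by simp
    moreover have "m \<ge> k" using mx(1) by simp
    then have "x k \<in> Q k" unfolding Q_def using mx(2-5) P.lim_in[OF mx(2), of k] by blast
    ultimately show ?thesis by simp
  qed
  obtain z where z: "z \<in> P.lim" "\<forall>k. z (0+k) \<in> Q k" using P.konig_from[OF QP ne cmp] by blast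
  obtain m0 where m0: "\<forall>w\<in>P.lim. w m0 = z m0 \<longrightarrow> f w n = f z n" using LC[OF z(1)] by blast
  have "z m0 \<in> Q m0" using z(2) by simp
  then obtain m x w where mx: "m \<ge> m0" "x \<in> P.lim" "w \<in> P.lim" "x m = w m" "f x n \<noteq> f w n" "x m0 = z m0"
    unfolding Q_def by blast
  have "w m0 = x m0" using P.thread[OF mx(2) mx(1)] P.thread[OF mx(3) mx(1)] mx(4) by simp
  then have "f w n = f z n" "f x n = f z n" using m0 mx by auto
  then show False using mx(5) by simp
qed

definition q where "q A = dimg H leH (f ` Cset P p A)"

lemma q_Olat: "q A \<in> Olat H leH h"
  unfolding q_def by (rule H.dimg_Olat) (auto simp: Cset_def intro: f_in)

definition S_of where "S_of D = {x \<in> P.lim. f x \<in> Cset H h D}"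
definition A_of where "A_of D = dimg P leP (S_of D)"

lemma A_of_Olat: "A_of D \<in> Olat P leP p"
  unfolding A_of_def by (rule P.dimg_Olat) (auto simp: S_of_def)

lemma Cset_A_of: assumes D: "D \<in> Olat H leH h" shows "Cset P p (A_of D) = S_of D"
  unfolding A_of_def
proof (rule P.Cset_dimg)
  show "S_of D \<subseteq> P.lim" unfolding S_of_def by blast
next
  fix z y assume z: "z \<in> P.lim" and y: "y \<in> S_of D" and zy: "lim_le leP z y"
  have yl: "y \<in> P.lim" and fy: "\<And>k. f y k \<in> D k" using y unfolding S_of_def Cset_def by auto
  have le: "lim_le leH (f z) (f y)" using f_mono[OF z yl zy] .
  have "f z k \<in> D k" for k
    using H.Olat_down[OF D fy[of k] H.lim_in[OF f_in[OF z]]] le unfolding lim_le_def by blast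
  then show "z \<in> S_of D" unfolding S_of_def Cset_def using z f_in[OF z] by blast
next
  fix z assume z: "z \<in> P.lim" and cl: "\<And>m. \<exists>y\<in>S_of D. y m = z m"
  have "f z k \<in> D k" for k
  proof -
    obtain m where m: "\<forall>w\<in>P.lim. w m = z m \<longrightarrow> f w k = f z k" using LC[OF z] by blast
    obtain y where y: "y \<in> S_of D" "y m = z m" using cl by blast
    have "y \<in> P.lim" "f y k \<in> D k" using y(1) unfolding S_of_def Cset_def by auto
    then show ?thesis using m y(2) by auto
  qed
  then show "z \<in> S_of D" unfolding S_of_def Cset_def using z f_in[OF z] by blast
qed

lemma q_A_of: assumes D: "D \<in> Olat H leH h" shows "q (A_of D) = D"
proof -
  have "f ` S_of D = Cset H h D"
  proof (intro equalityI subsetI)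
    fix u assume "u \<in> f ` S_of D" then show "u \<in> Cset H h D" unfolding S_of_def by blast
  next
    fix u assume u: "u \<in> Cset H h D"
    then have "u \<in> H.lim" unfolding Cset_def by blast
    then obtain x where "x \<in> P.lim" "u = f x" using f_img by blast
    then show "u \<in> f ` S_of D" unfolding S_of_def using u by blast
  qed
  then show ?thesis unfolding q_def Cset_A_of[OF D] using H.dimg_Cset[OF D] by simp
qed

lemma q_mono: fixes A B :: "nat \<Rightarrow> 'a set" shows "Olat_le A B \<Longrightarrow> Olat_le (q A) (q B)"
  unfolding Olat_le_def q_def
  by (intro allI H.dimg_mono image_mono P.Cset_mono) blast

lemma A_of_mono: "Olat_le D E \<Longrightarrow> Olat_le (A_of D) (A_of E)"
proof -
  assume "Olat_le D E"
  then have "Cset H h D \<subseteq> Cset H h E" unfolding Olat_le_def by (intro H.Cset_mono) blast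
  then have "S_of D \<subseteq> S_of E" unfolding S_of_def by blast
  then show ?thesis unfolding Olat_le_def A_of_def by (intro allI P.dimg_mono)
qed

lemma q_quot: "poset_quotient (Olat P leP p) Olat_le (Olat H leH h) Olat_le q"
  unfolding poset_quotient_def
proof (intro conjI ballI impI)
  show "q ` Olat P leP p = Olat H leH h"
  proof (intro equalityI subsetI)
    fix D assume "D \<in> q ` Olat P leP p" then show "D \<in> Olat H leH h" using q_Olat by blast
  next
    fix D assume D: "D \<in> Olat H leH h"
    then show "D \<in> q ` Olat P leP p" using q_A_of[OF D] A_of_Olat by (metis imageI)
  qed
next
  fix A B :: "nat \<Rightarrow> 'a set" assume "Olat_le A B" then show "Olat_le (q A) (q B)" by (rule q_mono)
next
  fix D E assume D: "D \<in> Olat H leH h" and E: "E \<in> Olat H leH h" and DE: "Olat_le D E"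
  show "\<exists>x\<in>Olat P leP p. \<exists>y\<in>Olat P leP p. Olat_le x y \<and> q x = D \<and> q y = E"
    using A_of_Olat A_of_mono[OF DE] q_A_of[OF D] q_A_of[OF E] by blast
qed

lemma q_join: "A \<in> Olat P leP p \<Longrightarrow> B \<in> Olat P leP p \<Longrightarrow> q (\<lambda>n. A n \<union> B n) = (\<lambda>n. q A n \<union> q B n)"
  unfolding q_def P.Cset_union image_Un dimg_def by auto

lemma q_down: "x \<in> P.lim \<Longrightarrow> q (down_map P leP x) = down_map H leH (f x)"
proof -
  assume x: "x \<in> P.lim"
  show ?thesis
  proof (rule ext, intro equalityI subsetI)
    fix n b assume "b \<in> q (down_map P leP x) n"
    then obtain y where y: "y \<in> P.lim" "lim_le leP y x" "leH n b (f y n)" and bH: "b \<in> H n"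
      unfolding q_def P.Cset_down_map[OF x] dimg_def by auto
    have "lim_le leH (f y) (f x)" using f_mono[OF y(1) x y(2)] .
    then have "leH n (f y n) (f x n)" unfolding lim_le_def by blast
    then have "leH n b (f x n)"
      using H.trans[OF bH H.lim_in[OF f_in[OF y(1)]] H.lim_in[OF f_in[OF x]] y(3)] by simp
    then show "b \<in> down_map H leH (f x) n" unfolding down_map_def down_def using bH by simp
  next
    fix n b assume "b \<in> down_map H leH (f x) n"
    then have bH: "b \<in> H n" and bx: "leH n b (f x n)" unfolding down_map_def down_def by auto
    have "lim_le leP x x" unfolding lim_le_def using P.refl P.lim_in[OF x] by blast
    then have "x \<in> Cset P p (down_map P leP x)" using P.Cset_down_map[OF x] x by blast
    then show "b \<in> q (down_map P leP x) n" unfolding q_def dimg_def using bH bx by blast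
  qed
qed

lemma q_local:
  assumes m: "\<forall>x\<in>P.lim. \<forall>w\<in>P.lim. x m = w m \<longrightarrow> f x n = f w n" and A: "A \<in> Olat P leP p"
  shows "q A n = {b \<in> H n. \<exists>a\<in>A m. \<exists>x\<in>P.lim. x m = a \<and> leH n b (f x n)}"
proof (intro equalityI subsetI)
  fix b assume "b \<in> q A n"
  then obtain x where x: "x \<in> Cset P p A" "leH n b (f x n)" and bH: "b \<in> H n"
    unfolding q_def dimg_def by auto
  have "x \<in> P.lim" "x m \<in> A m" using x(1) unfolding Cset_def by auto
  then show "b \<in> {b \<in> H n. \<exists>a\<in>A m. \<exists>x\<in>P.lim. x m = a \<and> leH n b (f x n)}" using x(2) bH by blast
next
  fix b assume "b \<in> {b \<in> H n. \<exists>a\<in>A m. \<exists>x\<in>P.lim. x m = a \<and> leH n b (f x n)}"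
  then obtain a x where bH: "b \<in> H n" and a: "a \<in> A m" and x: "x \<in> P.lim" "x m = a" "leH n b (f x n)" by blast
  obtain x' where x': "x' \<in> Cset P p A" "leP m a (x' m)" using P.Olat_lift[OF A a] by blast
  have x'l: "x' \<in> P.lim" using x'(1) unfolding Cset_def by blast
  have aP: "a \<in> P m" using a P.Olat_sub[OF A] by blast
  obtain u v where uv: "u \<in> P.lim" "v \<in> P.lim" "u m = a" "v m = x' m" "lim_le leP u v"
    using P.lift_pair[OF aP P.lim_in[OF x'l] x'(2)] by blast
  have "f u n = f x n" using m uv(1,3) x(1,2) by metis
  moreover have "f v n = f x' n" using m uv(2,4) x'l by metis
  moreover have "leH n (f u n) (f v n)" using f_mono[OF uv(1,2,5)] unfolding lim_le_def by blast
  ultimately have "leH n (f x n) (f x' n)" by simp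
  then have "leH n b (f x' n)"
    using H.trans[OF bH H.lim_in[OF f_in[OF x(1)]] H.lim_in[OF f_in[OF x'l]] x(3)] by simp
  then show "b \<in> q A n" unfolding q_def dimg_def using bH x'(1) by blast
qed

lemma q_cont: "continuous_map (Olat_top P leP p) (Olat_top H leH h) q"
proof -
  have comp: "continuous_map (Olat_top P leP p) (discrete_topology (downsets (H n) (leH n))) (\<lambda>A. q A n)" for n
  proof -
    obtain m where m: "\<forall>x\<in>P.lim. \<forall>w\<in>P.lim. x m = w m \<longrightarrow> f x n = f w n" using UC by blast
    define G where "G X = {b \<in> H n. \<exists>a\<in>X. \<exists>x\<in>P.lim. x m = a \<and> leH n b (f x n)}" for X
    have c1: "continuous_map (Olat_top P leP p) (discrete_topology (downsets (P m) (leP m))) (\<lambda>A. A m)"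
      unfolding Olat_top_def by (intro continuous_map_from_subtopology continuous_map_product_projection) simp
    have "G X \<in> downsets (H n) (leH n)" for X
      unfolding downsets_def
    proof (intro CollectI conjI ballI impI)
      show "G X \<subseteq> H n" unfolding G_def by blast
      fix b c assume b: "b \<in> G X" and c: "c \<in> H n" and cb: "leH n c b"
      then obtain a x where ax: "a \<in> X" "x \<in> P.lim" "x m = a" "leH n b (f x n)" and bH: "b \<in> H n"
        unfolding G_def by blast
      have "leH n c (f x n)" using H.trans[OF c bH H.lim_in[OF f_in[OF ax(2)]] cb ax(4)] .
      then show "c \<in> G X" unfolding G_def using c ax(1-3) by blast
    qed
    then have c2: "continuous_map (discrete_topology (downsets (P m) (leP m))) (discrete_topology (downsets (H n) (leH n))) G"
      by simp
    have "continuous_map (Olat_top P leP p) (discrete_topology (downsets (H n) (leH n))) (G \<circ> (\<lambda>A. A m))"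
      by (rule continuous_map_compose[OF c1 c2])
    then show ?thesis
    proof (rule continuous_map_eq)
      fix A assume "A \<in> topspace (Olat_top P leP p)"
      then have A: "A \<in> Olat P leP p" using topspace_Olat_top by blast
      show "(G \<circ> (\<lambda>A. A m)) A = q A n" unfolding G_def o_def using q_local[OF m A] by simp
    qed
  qed
  have "continuous_map (Olat_top P leP p) (product_topology (\<lambda>n. discrete_topology (downsets (H n) (leH n))) UNIV) q"
    using comp by (simp add: continuous_map_componentwise_UNIV)
  moreover have "q \<in> topspace (Olat_top P leP p) \<rightarrow> Olat H leH h" using q_Olat by blast
  ultimately show ?thesis unfolding Olat_top_def[of H leH h] by (rule continuous_map_into_subtopology)
qed

lemma main: "\<exists>q. poset_quotient (Olat P leP p) Olat_le (Olat H leH h) Olat_le q \<and>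
             continuous_map (Olat_top P leP p) (Olat_top H leH h) q \<and>
             (\<forall>A\<in>Olat P leP p. \<forall>B\<in>Olat P leP p. q (\<lambda>n. A n \<union> B n) = (\<lambda>n. q A n \<union> q B n)) \<and>
             (\<forall>x\<in>inv_limit P p. q (down_map P leP x) = down_map H leH (f x))"
  using q_quot q_cont q_join q_down by blast

end


theorem mainTheorem17:
  fixes P :: "nat \<Rightarrow> 'a set" and leP :: "nat \<Rightarrow> 'a \<Rightarrow> 'a \<Rightarrow> bool" and p :: "nat \<Rightarrow> nat \<Rightarrow> 'a \<Rightarrow> 'a"
    and H :: "nat \<Rightarrow> 'b set" and leH :: "nat \<Rightarrow> 'b \<Rightarrow> 'b \<Rightarrow> bool" and h :: "nat \<Rightarrow> nat \<Rightarrow> 'b \<Rightarrow> 'b"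
    and f :: "(nat \<Rightarrow> 'a) \<Rightarrow> (nat \<Rightarrow> 'b)"
  assumes H_sys: "inv_system H leH h"
    and P_fraisse: "fraisse_seq P leP p"
    and f_quot: "poset_quotient (inv_limit P p) (lim_le leP) (inv_limit H h) (lim_le leH) f"
    and f_cont: "continuous_map (lim_top P p) (lim_top H h) f"
  shows "\<exists>q. poset_quotient (Olat P leP p) Olat_le (Olat H leH h) Olat_le q \<and>
             continuous_map (Olat_top P leP p) (Olat_top H leH h) q \<and>
             (\<forall>A\<in>Olat P leP p. \<forall>B\<in>Olat P leP p. q (\<lambda>n. A n \<union> B n) = (\<lambda>n. q A n \<union> q B n)) \<and>
             (\<forall>x\<in>inv_limit P p. q (down_map P leP x) = down_map H leH (f x))"
proof -
  have Psys: "inv_system P leP p" using P_fraisse unfolding fraisse_seq_def by blast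
  have "fsetup P leP p H leH h f"
    unfolding fsetup_def fsetup_axioms_def invsys_def using Psys H_sys f_quot f_cont by blast
  then show ?thesis by (rule fsetup.main)
qed

end
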